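(* Let $q\ge 3$ be a prime power, let $d,n\in\mathbb{N}$ with $n\ge 2$, and let $\varpi\colon(\mathbb{F}_q^d)^{\otimes n}\to\mathbb{F}_q$ be an $n$-linear form. Let $E\subset\mathbb{F}_q^d$ have projective index $\alpha$. Suppose there exist an $r$-dimensional subspace $A$ of $(\mathbb{F}_q^d)^{\otimes(n-1)}$, a subspace $B$ of $\mathbb{F}_q^d$ and an index $k\in[n]$ such that (1) $E^{\boxtimes(n-1)}\subset A$, (2) $E\subset B$, (3) $\varpi$ is $(A,B)$-non-degenerate in the $k$-th coordinate, and (4) $|E|>q^{\frac{r+n-1}{n}}\left(1-\alpha\left(1-\frac{2}{q}\right)\right)^{\frac1n}$. Then $\mathbb{F}_q^*\subset\varpi(E^n)$, where $\varpi(E^n)=\{\varpi(x_1\otimes\cdots\otimes x_n): x_1,\dots,x_n\in E\}$ and $\mathbb{F}_q^*=\mathbb{F}_q\setminus\{0\}$.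
   Context: An $n$-linear form on a vector space $V$ over $\mathbb{F}$ is a linear map $\varpi\colon V^{\otimes n}\to\mathbb{F}$; one writes $\varpi(x_1,\dots,x_n)=\varpi(x_1\otimes\cdots\otimes x_n)$. For $E\subset V$, $E^{\boxtimes m}$ denotes the set of pure tensors $\{x_1\otimes\cdots\otimes x_m: x_i\in E\}\subset V^{\otimes m}$ (the image of $E^m$ under $(x_1,\dots,x_m)\mapsto x_1\otimes\cdots\otimes x_m$). For subspaces $A\le V^{\otimes(n-1)}$, $B\le V$ and $k\in[n]$, the form $\varpi$ is $(A,B)$-non-degenerate in the $k$-th coordinate if for every nonzero $y\in B$ the linear functional on $A$ obtained by restricting the linear extension of $x_1\otimes\cdots\otimes x_{n-1}\mapsto\varpi(x_1,\dots,x_{k-1},y,x_k,\dots,x_{n-1})$ (i.e. $y$ inserted in the $k$-th slot) is not identically zero. A set $E\subset\mathbb{F}_q^d$ has projective index $\alpha$ if $\frac{|\{(a,w)\in(\mathbb{F}_q^*\setminus\{1\})\times\mathbb{F}_q^d:\ w\in E,\ aw\in E\}|}{(q-2)|E|}\ge\alpha$. *)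

theory Defs
  imports Complex_Main "HOL-Library.Function_Algebras"
begin

text \<open>The field is a finite field type 'a (so q = CARD('a) is a prime power).
 The space F_q^d is modelled as the functions x :: nat => 'a vanishing outside {..<d}.
 The tensor power (F_q^d)^{(tensor) m} is modelled by its coordinates: functions
 f :: nat list => 'a supported on the multi-indices of length m with entries < d.\<close>

definition vecs :: "nat \<Rightarrow> (nat \<Rightarrow> 'a::field) set" where
  "vecs d = {x. \<forall>i\<ge>d. x i = 0}"

definition idx :: "nat \<Rightarrow> nat \<Rightarrow> nat list set" where
  "idx d m = {is. length is = m \<and> set is \<subseteq> {..<d}}"

definition tens :: "nat \<Rightarrow> nat \<Rightarrow> (nat list \<Rightarrow> 'a::field) set" where
  "tens d m = {f. \<forall>is. is \<notin> idx d m \<longrightarrow> f is = 0}"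

definition fscale :: "'a::field \<Rightarrow> ('b \<Rightarrow> 'a) \<Rightarrow> ('b \<Rightarrow> 'a)" where
  "fscale c f = (\<lambda>i. c * f i)"

definition ptensor :: "(nat \<Rightarrow> 'a::field) list \<Rightarrow> (nat list \<Rightarrow> 'a)" where
  "ptensor xs = (\<lambda>is. if length is = length xs
                      then (\<Prod>j<length xs. (xs ! j) (is ! j)) else 0)"

definition boxpow :: "(nat \<Rightarrow> 'a::field) set \<Rightarrow> nat \<Rightarrow> (nat list \<Rightarrow> 'a) set" where
  "boxpow E m = {ptensor xs | xs. length xs = m \<and> set xs \<subseteq> E}"

definition nlinear_form :: "nat \<Rightarrow> nat \<Rightarrow> ((nat list \<Rightarrow> 'a::field) \<Rightarrow> 'a) \<Rightarrow> bool" where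
  "nlinear_form d n w \<longleftrightarrow>
     (\<forall>f\<in>tens d n. \<forall>g\<in>tens d n. w (\<lambda>i. f i + g i) = w f + w g) \<and>
     (\<forall>c. \<forall>f\<in>tens d n. w (fscale c f) = c * w f)"

text \<open>Linear map V^{(tensor)(n-1)} -> V^{(tensor) n} inserting y into slot k (1-based):
 it is the linear extension of x_1(x)...(x)x_{n-1} |-> x_1(x)..x_{k-1}(x)y(x)x_k(x)...(x)x_{n-1}.\<close>
definition insert_slot :: "nat \<Rightarrow> nat \<Rightarrow> (nat \<Rightarrow> 'a::field) \<Rightarrow> (nat list \<Rightarrow> 'a) \<Rightarrow> (nat list \<Rightarrow> 'a)" where
  "insert_slot n k y f = (\<lambda>is. if length is = n
       then y (is ! (k - 1)) * f (take (k - 1) is @ drop k is) else 0)"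

definition nondeg :: "nat \<Rightarrow> ((nat list \<Rightarrow> 'a::field) \<Rightarrow> 'a) \<Rightarrow> (nat list \<Rightarrow> 'a) set
                      \<Rightarrow> (nat \<Rightarrow> 'a) set \<Rightarrow> nat \<Rightarrow> bool" where
  "nondeg n w A B k \<longleftrightarrow>
     (\<forall>y\<in>B. y \<noteq> (\<lambda>_. 0) \<longrightarrow> (\<exists>a\<in>A. w (insert_slot n k y a) \<noteq> 0))"

definition has_proj_index :: "(nat \<Rightarrow> 'a::{finite,field}) set \<Rightarrow> real \<Rightarrow> bool" where
  "has_proj_index E \<alpha> \<longleftrightarrow>
     real (card {(a, w). a \<in> UNIV - {0, 1} \<and> w \<in> E \<and> fscale a w \<in> E})
       / ((real (card (UNIV :: 'a set)) - 2) * real (card E)) \<ge> \<alpha>"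

definition form_image :: "((nat list \<Rightarrow> 'a::field) \<Rightarrow> 'a) \<Rightarrow> (nat \<Rightarrow> 'a) set \<Rightarrow> nat \<Rightarrow> 'a set" where
  "form_image w E n = w ` boxpow E n"

end

theory Submission
  imports Defs "HOL-Analysis.Convex" "HOL-Library.Product_Plus"
begin

lemma vs_fscale: "vector_space (fscale :: 'a::field \<Rightarrow> ('b \<Rightarrow> 'a) \<Rightarrow> _)"
  by unfold_locales (auto simp: fscale_def plus_fun_def algebra_simps)

lemma mod_fscale: "module (fscale :: 'a::field \<Rightarrow> ('b \<Rightarrow> 'a) \<Rightarrow> _)"
  by unfold_locales (auto simp: fscale_def plus_fun_def algebra_simps)

lemma finite_tens: "finite (tens d m :: (nat list \<Rightarrow> 'a::{finite,field}) set)"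
proof -
  have fi: "finite (idx d m)" unfolding idx_def
    using finite_lists_length_eq[of "{..<d}" m] by (simp add: conj_commute)
  have "tens d m \<subseteq> (\<lambda>g x. if x \<in> idx d m then g x else 0) ` (idx d m \<rightarrow>\<^sub>E (UNIV::'a set))"
  proof
    fix f :: "nat list \<Rightarrow> 'a" assume "f \<in> tens d m"
    then have "f = (\<lambda>x. if x \<in> idx d m then restrict f (idx d m) x else 0)"
      unfolding fun_eq_iff tens_def by simp
    then show "f \<in> (\<lambda>g x. if x \<in> idx d m then g x else 0) ` (idx d m \<rightarrow>\<^sub>E UNIV)"
      by (rule image_eqI[where x="restrict f (idx d m)"]) simp_all
  qed
  then show ?thesis by (rule finite_subset) (simp add: fi finite_PiE)
qed

lemma finite_vecs: "finite (vecs d :: (nat \<Rightarrow> 'a::{finite,field}) set)"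
proof -
  have "vecs d \<subseteq> (\<lambda>g x. if x \<in> {..<d} then g x else 0) ` ({..<d} \<rightarrow>\<^sub>E (UNIV::'a set))"
  proof
    fix f :: "nat \<Rightarrow> 'a" assume "f \<in> vecs d"
    then have "f = (\<lambda>x. if x \<in> {..<d} then restrict f {..<d} x else 0)"
      unfolding fun_eq_iff vecs_def by simp
    then show "f \<in> (\<lambda>g x. if x \<in> {..<d} then g x else 0) ` ({..<d} \<rightarrow>\<^sub>E UNIV)"
      by (rule image_eqI[where x="restrict f {..<d}"]) simp_all
  qed
  then show ?thesis by (rule finite_subset) (simp add: finite_PiE)
qed

lemma card_subspace_le:
  fixes A :: "('b \<Rightarrow> 'a::{finite,field}) set"
  assumes "finite A" "vector_space.dim fscale A = r"
  shows "card A \<le> card (UNIV::'a set) ^ r"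
proof -
  interpret V: vector_space "fscale :: 'a \<Rightarrow> ('b \<Rightarrow> 'a) \<Rightarrow> _" by (rule vs_fscale)
  obtain \<beta> where b: "\<beta> \<subseteq> A" "V.independent \<beta>" "A \<subseteq> V.span \<beta>" "card \<beta> = V.dim A"
    using V.basis_exists by blast
  have fb: "finite \<beta>" using b(1) assms(1) finite_subset by blast
  have e1: "V.span \<beta> = range (\<lambda>u. \<Sum>v\<in>\<beta>. fscale (u v) v)" using V.span_finite[OF fb] .
  have e2: "range (\<lambda>u. \<Sum>v\<in>\<beta>. fscale (u v) v) = (\<lambda>u. \<Sum>v\<in>\<beta>. fscale (u v) v) ` (\<beta> \<rightarrow>\<^sub>E UNIV)"
  proof
    show "range (\<lambda>u. \<Sum>v\<in>\<beta>. fscale (u v) v) \<subseteq> (\<lambda>u. \<Sum>v\<in>\<beta>. fscale (u v) v) ` (\<beta> \<rightarrow>\<^sub>E UNIV)"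
    proof
      fix x assume "x \<in> range (\<lambda>u. \<Sum>v\<in>\<beta>. fscale (u v) v)"
      then obtain u where "x = (\<Sum>v\<in>\<beta>. fscale (u v) v)" by blast
      also have "\<dots> = (\<Sum>v\<in>\<beta>. fscale (restrict u \<beta> v) v)" by (intro sum.cong) auto
      finally show "x \<in> (\<lambda>u. \<Sum>v\<in>\<beta>. fscale (u v) v) ` (\<beta> \<rightarrow>\<^sub>E UNIV)"
        by (rule image_eqI[where x="restrict u \<beta>"]) simp_all
    qed
  qed auto
  have "A \<subseteq> (\<lambda>u. \<Sum>v\<in>\<beta>. fscale (u v) v) ` (\<beta> \<rightarrow>\<^sub>E UNIV)" using b(3) e1 e2 by blast
  then have "card A \<le> card ((\<lambda>u. \<Sum>v\<in>\<beta>. fscale (u v) v) ` (\<beta> \<rightarrow>\<^sub>E (UNIV::'a set)))"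
    by (intro card_mono finite_imageI finite_PiE fb) simp_all
  also have "\<dots> \<le> card (\<beta> \<rightarrow>\<^sub>E (UNIV::'a set))" by (rule card_image_le) (intro finite_PiE fb; simp)
  also have "\<dots> = card (UNIV::'a set) ^ card \<beta>" by (simp add: card_PiE fb)
  finally show ?thesis by (simp only: b(4) assms(2))
qed

lemma subspace_facts:
  assumes "module.subspace (fscale :: 'a::field \<Rightarrow> ('b \<Rightarrow> 'a) \<Rightarrow> _) A"
  shows "0 \<in> A" "\<And>a b. a \<in> A \<Longrightarrow> b \<in> A \<Longrightarrow> a + b \<in> A" "\<And>c a. a \<in> A \<Longrightarrow> fscale c a \<in> A"
  using assms unfolding module.subspace_def[OF mod_fscale] by blast+

lemma fiber_card:
  fixes A :: "('b \<Rightarrow> 'a::field) set" and f :: "('b \<Rightarrow> 'a) \<Rightarrow> 'c::{ab_group_add,finite}"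
  assumes fin: "finite A" and sub: "module.subspace fscale A"
    and add: "\<And>a b. a\<in>A \<Longrightarrow> b\<in>A \<Longrightarrow> f (a + b) = f a + f b"
    and surj: "\<And>v. \<exists>a\<in>A. f a = v"
  shows "card A = card (UNIV::'c set) * card {a\<in>A. f a = v}"
proof -
  note S = subspace_facts[OF sub]
  have f0: "f 0 = 0" using add[OF S(1) S(1)] by simp
  have fib: "card {a\<in>A. f a = u} = card {a\<in>A. f a = 0}" for u
  proof -
    obtain a0 where a0: "a0 \<in> A" "f a0 = u" using surj by blast
    define m where "m = fscale (-1) a0"
    have mA: "m \<in> A" unfolding m_def using S(3) a0(1) by blast
    have am: "a0 + m = 0" by (simp add: m_def fscale_def fun_eq_iff)
    have fm: "f m = - u" using add[OF a0(1) mA] am f0 a0(2) by (simp add: eq_neg_iff_add_eq_0 add.commute)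
    have eq: "{a\<in>A. f a = u} = (\<lambda>x. x + a0) ` {a\<in>A. f a = 0}"
    proof
      show "{a\<in>A. f a = u} \<subseteq> (\<lambda>x. x + a0) ` {a\<in>A. f a = 0}"
      proof
        fix a assume a: "a \<in> {a\<in>A. f a = u}"
        have "a + m \<in> {a\<in>A. f a = 0}" using a add[OF _ mA] S(2)[OF _ mA] fm by auto
        moreover have "a = (a + m) + a0" using am by (simp add: add.assoc add.commute)
        ultimately show "a \<in> (\<lambda>x. x + a0) ` {a\<in>A. f a = 0}" by (rule rev_image_eqI[where x="a + m" and f="\<lambda>x. x + a0"])
      qed
    next
      show "(\<lambda>x. x + a0) ` {a\<in>A. f a = 0} \<subseteq> {a\<in>A. f a = u}"
        using add[OF _ a0(1)] S(2)[OF _ a0(1)] a0(2) by auto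
    qed
    have inj: "inj_on (\<lambda>x. x + a0) {a\<in>A. f a = 0}" by (simp add: inj_on_def)
    show ?thesis unfolding eq by (rule card_image[OF inj])
  qed
  have "card A = (\<Sum>x\<in>A. 1)" by simp
  also have "\<dots> = (\<Sum>u\<in>(UNIV::'c set). \<Sum>x\<in>{x. x \<in> A \<and> f x = u}. 1)"
    by (rule sum.group[symmetric]) (use fin in auto)
  also have "\<dots> = (\<Sum>u\<in>(UNIV::'c set). card {a\<in>A. f a = 0})"
    by (rule sum.cong[OF refl]) (metis card_eq_sum fib)
  also have "\<dots> = card (UNIV::'c set) * card {a\<in>A. f a = v}" using fib[of v] by simp
  finally show ?thesis .
qed

lemma insert_slot_tens:
  assumes "y \<in> vecs d" "T \<in> tens d (n - 1)" "k \<in> {1..n}"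
  shows "insert_slot n k y T \<in> tens d n"
  unfolding tens_def mem_Collect_eq
proof (intro allI impI)
  fix "is" :: "nat list" assume nis: "is \<notin> idx d n"
  show "insert_slot n k y T is = 0"
  proof (cases "length is = n")
    case True
    let ?L = "take (k - 1) is @ drop k is"
    have kl: "k - 1 < length is" using True assms(3) by auto
    have dec: "is = take (k - 1) is @ is ! (k - 1) # drop k is"
      using id_take_nth_drop[OF kl] assms(3) by simp
    have "set is = set (take (k - 1) is) \<union> {is ! (k - 1)} \<union> set (drop k is)"
      by (subst dec) auto
    then have "is ! (k - 1) \<ge> d \<or> ?L \<notin> idx d (n - 1)"
      using nis True assms(3) by (auto simp: idx_def)
    then show ?thesis
    proof
      assume "is ! (k - 1) \<ge> d" then show ?thesis
        using assms(1) by (simp add: insert_slot_def vecs_def)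
    next
      assume "?L \<notin> idx d (n - 1)" then show ?thesis
        using assms(2) by (simp add: insert_slot_def tens_def)
    qed
  qed (simp add: insert_slot_def)
qed

lemma insert_slot_addT: "insert_slot n k y (T1 + T2) = insert_slot n k y T1 + insert_slot n k y T2"
  by (simp add: insert_slot_def fun_eq_iff algebra_simps)
lemma insert_slot_scaleT: "insert_slot n k y (fscale c T) = fscale c (insert_slot n k y T)"
  by (simp add: insert_slot_def fscale_def fun_eq_iff algebra_simps)
lemma insert_slot_lin_y: "insert_slot n k (fscale a y1 + fscale b y2) T
   = fscale a (insert_slot n k y1 T) + fscale b (insert_slot n k y2 T)"
  by (simp add: insert_slot_def fscale_def fun_eq_iff algebra_simps)
lemma insert_slot_zero_y: "insert_slot n k 0 T = 0"
  by (simp add: insert_slot_def fun_eq_iff)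

lemma vecs_lin: "y1 \<in> vecs d \<Longrightarrow> y2 \<in> vecs d \<Longrightarrow> fscale a y1 + fscale b y2 \<in> vecs d"
  by (simp add: vecs_def fscale_def)
lemma tens_add: "f \<in> tens d m \<Longrightarrow> g \<in> tens d m \<Longrightarrow> f + g \<in> tens d m"
  by (simp add: tens_def)
lemma tens_scale: "f \<in> tens d m \<Longrightarrow> fscale c f \<in> tens d m"
  by (simp add: tens_def fscale_def)

lemma w_add: "nlinear_form d n w \<Longrightarrow> f \<in> tens d n \<Longrightarrow> g \<in> tens d n \<Longrightarrow> w (f + g) = w f + w g"
  unfolding nlinear_form_def plus_fun_def by blast
lemma w_scale: "nlinear_form d n w \<Longrightarrow> f \<in> tens d n \<Longrightarrow> w (fscale c f) = c * w f"
  unfolding nlinear_form_def by blast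
lemma w_zero: "nlinear_form d n w \<Longrightarrow> w 0 = 0"
proof -
  assume a: "nlinear_form d n w"
  have "(0 :: nat list \<Rightarrow> _) \<in> tens d n" by (simp add: tens_def)
  from w_scale[OF a this, of 0] show ?thesis by (simp add: fscale_def zero_fun_def)
qed

lemma phi_addT:
  assumes "nlinear_form d n w" "y \<in> vecs d" "T1 \<in> tens d (n - 1)" "T2 \<in> tens d (n - 1)" "k \<in> {1..n}"
  shows "w (insert_slot n k y (T1 + T2)) = w (insert_slot n k y T1) + w (insert_slot n k y T2)"
  unfolding insert_slot_addT
  by (rule w_add[OF assms(1) insert_slot_tens[OF assms(2) assms(3) assms(5)] insert_slot_tens[OF assms(2) assms(4) assms(5)]])
lemma phi_scaleT:
  assumes "nlinear_form d n w" "y \<in> vecs d" "T \<in> tens d (n - 1)" "k \<in> {1..n}"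
  shows "w (insert_slot n k y (fscale c T)) = c * w (insert_slot n k y T)"
  unfolding insert_slot_scaleT by (rule w_scale[OF assms(1) insert_slot_tens[OF assms(2) assms(3) assms(4)]])
lemma phi_lin_y:
  assumes "nlinear_form d n w" "y1 \<in> vecs d" "y2 \<in> vecs d" "T \<in> tens d (n - 1)" "k \<in> {1..n}"
  shows "w (insert_slot n k (fscale a y1 + fscale b y2) T) = a * w (insert_slot n k y1 T) + b * w (insert_slot n k y2 T)"
proof -
  have t1: "insert_slot n k y1 T \<in> tens d n" and t2: "insert_slot n k y2 T \<in> tens d n"
    using insert_slot_tens[OF assms(2) assms(4) assms(5)] insert_slot_tens[OF assms(3) assms(4) assms(5)] by auto
  show ?thesis unfolding insert_slot_lin_y
    by (simp add: w_add[OF assms(1) tens_scale[OF t1] tens_scale[OF t2]] w_scale[OF assms(1) t1] w_scale[OF assms(1) t2])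
qed
lemma phi_zero_y: "nlinear_form d n w \<Longrightarrow> w (insert_slot n k 0 T) = 0"
  by (simp add: insert_slot_zero_y w_zero)

lemma prod_zip: "length is = length xs \<Longrightarrow>
  (\<Prod>j<length xs. (xs ! j) (is ! j)) = prod_list (map (\<lambda>(x, i). x i) (zip xs is))"
proof (induction xs arbitrary: "is")
  case Nil then show ?case by simp
next
  case (Cons x xs)
  then obtain i is' where "is = i # is'" by (cases "is") auto
  with Cons show ?case by (simp del: prod.lessThan_Suc add: prod.lessThan_Suc_shift)
qed

lemma ptensor_zip: "ptensor xs = (\<lambda>is. if length is = length xs then prod_list (map (\<lambda>(x, i). x i) (zip xs is)) else 0)"
  by (simp add: ptensor_def prod_zip fun_eq_iff)

lemma insert_slot_ptensor:
  assumes len: "length xs = n - 1" and k: "k \<in> {1..n}"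
  shows "insert_slot n k y (ptensor xs) = ptensor (take (k - 1) xs @ y # drop (k - 1) xs)"
proof
  fix "is" :: "nat list"
  let ?a = "k - 1"
  let ?L = "take ?a xs @ y # drop ?a xs"
  have lenL: "length ?L = n" using len k by auto
  show "insert_slot n k y (ptensor xs) is = ptensor ?L is"
  proof (cases "length is = n")
    case True
    have al: "?a < length is" using True k by auto
    have dec: "is = take ?a is @ is ! ?a # drop (Suc ?a) is"
      using id_take_nth_drop[OF al] .
    have sk: "Suc ?a = k" using k by auto
    have l1: "length (take ?a xs) = length (take ?a is)" using len True k by auto
    have "zip ?L is = zip (take ?a xs) (take ?a is) @ (y, is ! ?a) # zip (drop ?a xs) (drop k is)"
      apply (subst dec)
      apply (subst zip_append[OF l1])
      apply (simp only: zip_Cons_Cons sk)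
      done
    note z1 = this
    have z2: "zip xs (take ?a is @ drop k is) = zip (take ?a xs) (take ?a is) @ zip (drop ?a xs) (drop k is)"
    proof -
      have "zip xs (take ?a is @ drop k is) = zip (take ?a xs @ drop ?a xs) (take ?a is @ drop k is)" by simp
      also have "\<dots> = zip (take ?a xs) (take ?a is) @ zip (drop ?a xs) (drop k is)"
        by (rule zip_append[OF l1])
      finally show ?thesis .
    qed
    have lM: "length (take ?a is @ drop k is) = length xs" using True len k by auto
    let ?f = "\<lambda>(x::nat\<Rightarrow>'a, i::nat). x i"
    have "insert_slot n k y (ptensor xs) is = y (is ! ?a) * prod_list (map ?f (zip xs (take ?a is @ drop k is)))"
      unfolding insert_slot_def ptensor_zip using True lM by simp
    also have "\<dots> = prod_list (map ?f (zip ?L is))"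
      unfolding z1 z2 by (simp add: mult.left_commute)
    also have "\<dots> = ptensor ?L is" unfolding ptensor_zip using True lenL by simp
    finally show ?thesis .
  next
    case False
    then show ?thesis using lenL by (simp add: insert_slot_def ptensor_def)
  qed
qed

lemma ptensor_slice:
  assumes "length ys = m" "length is0 = m" "i < m"
  shows "ptensor ys (is0[i := a]) = (ys ! i) a * (\<Prod>j\<in>{..<m} - {i}. (ys ! j) (is0 ! j))"
proof -
  have "ptensor ys (is0[i := a]) = (\<Prod>j<m. (ys ! j) ((is0[i := a]) ! j))"
    using assms by (simp add: ptensor_def)
  also have "\<dots> = (ys ! i) ((is0[i := a]) ! i) * (\<Prod>j\<in>{..<m} - {i}. (ys ! j) ((is0[i := a]) ! j))"
    using assms(3) by (subst prod.remove[of _ i]) auto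
  also have "\<dots> = (ys ! i) a * (\<Prod>j\<in>{..<m} - {i}. (ys ! j) (is0 ! j))"
    using assms by (intro arg_cong2[where f="(*)"] prod.cong) auto
  finally show ?thesis .
qed

lemma nonzero_vec_ex: "(x :: nat \<Rightarrow> 'a::zero) \<noteq> 0 \<Longrightarrow> \<exists>i. x i \<noteq> 0"
  by (auto simp: fun_eq_iff)

lemma ptensor_nz_idx:
  assumes "\<forall>x\<in>set xs. (x :: nat \<Rightarrow> 'a::field) \<noteq> 0"
  obtains is0 where "length is0 = length xs" "\<forall>j<length xs. (xs ! j) (is0 ! j) \<noteq> 0"
proof -
  define is0 where "is0 = map (\<lambda>x. SOME i. x i \<noteq> 0) xs"
  have "\<forall>j<length xs. (xs ! j) (is0 ! j) \<noteq> 0"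
  proof (intro allI impI)
    fix j assume j: "j < length xs"
    then have "xs ! j \<noteq> 0" using assms by auto
    then have "\<exists>i. (xs ! j) i \<noteq> 0" by (rule nonzero_vec_ex)
    then show "(xs ! j) (is0 ! j) \<noteq> 0" unfolding is0_def using j by (simp add: someI_ex[of "\<lambda>i. (xs ! j) i \<noteq> 0"])
  qed
  then show ?thesis using that[of is0] by (simp add: is0_def)
qed

lemma ptensor_nz:
  assumes "\<forall>x\<in>set xs. (x :: nat \<Rightarrow> 'a::field) \<noteq> 0"
  shows "ptensor xs \<noteq> 0"
proof -
  obtain is0 where i: "length is0 = length xs" "\<forall>j<length xs. (xs ! j) (is0 ! j) \<noteq> 0"
    using ptensor_nz_idx[OF assms] by blast
  have "ptensor xs is0 \<noteq> 0" using i by (simp add: ptensor_def prod_zero_iff)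
  then show ?thesis by auto
qed

lemma fiber_bound:
  fixes W :: "nat list \<Rightarrow> 'a::{finite,field}" and E0 :: "(nat \<Rightarrow> 'a) set"
  assumes m: "m \<ge> 1" and nz: "\<forall>x\<in>E0. x \<noteq> 0"
  shows "card {ys. length ys = m \<and> set ys \<subseteq> E0 \<and> ptensor ys = W} \<le> (card (UNIV::'a set) - 1) ^ (m - 1)"
proof (cases "{ys. length ys = m \<and> set ys \<subseteq> E0 \<and> ptensor ys = W} = {}")
  case True then show ?thesis by (metis card.empty zero_le)
next
  case False
  let ?F = "{ys. length ys = m \<and> set ys \<subseteq> E0 \<and> ptensor ys = W}"
  obtain xs0 where xs0: "xs0 \<in> ?F" using False by blast
  obtain is0 where is0: "length is0 = length xs0" "\<forall>j<length xs0. (xs0 ! j) (is0 ! j) \<noteq> 0"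
    using ptensor_nz_idx[of xs0] xs0 nz by blast
  have li: "length is0 = m" using is0 xs0 by simp
  have Wnz: "W is0 \<noteq> 0" using xs0 is0 li by (auto simp: ptensor_def prod_zero_iff)
  have prodW: "(\<Prod>j<m. (ys ! j) (is0 ! j)) = W is0" if "ys \<in> ?F" for ys
    using that li by (auto simp: ptensor_def)
  have cnz: "(ys ! j) (is0 ! j) \<noteq> 0" if "ys \<in> ?F" "j < m" for ys j
    using prodW[OF that(1)] Wnz that(2) prod_zero_iff[of "{..<m}" "\<lambda>j. (ys ! j) (is0 ! j)"] by auto
  define g where "g ys = map (\<lambda>j. (ys ! j) (is0 ! j)) [0..<m - 1]" for ys :: "(nat \<Rightarrow> 'a) list"
  let ?T = "{cs. set cs \<subseteq> (UNIV - {0::'a}) \<and> length cs = m - 1}"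
  have gT: "g ` ?F \<subseteq> ?T"
    using cnz by (auto simp: g_def)
  have ginj: "inj_on g ?F"
  proof (rule inj_onI)
    fix ys ys' assume y: "ys \<in> ?F" and y': "ys' \<in> ?F" and geq: "g ys = g ys'"
    have c1: "(ys ! j) (is0 ! j) = (ys' ! j) (is0 ! j)" if "j < m - 1" for j
    proof -
      have "g ys ! j = g ys' ! j" using geq by simp
      then show ?thesis using that by (simp add: g_def)
    qed
    have msuc: "m = Suc (m - 1)" using m by simp
    have p1: "(\<Prod>j<m - 1. (ys ! j) (is0 ! j)) = (\<Prod>j<m - 1. (ys' ! j) (is0 ! j))"
      using c1 by (intro prod.cong) auto
    have p1nz: "(\<Prod>j<m - 1. (ys ! j) (is0 ! j)) \<noteq> 0"
      using cnz[OF y] by (auto simp: prod_zero_iff)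
    have "(\<Prod>j<m - 1. (ys ! j) (is0 ! j)) * (ys ! (m - 1)) (is0 ! (m - 1))
        = (\<Prod>j<m - 1. (ys' ! j) (is0 ! j)) * (ys' ! (m - 1)) (is0 ! (m - 1))"
      using prodW[OF y] prodW[OF y'] msuc by (metis prod.lessThan_Suc)
    then have last: "(ys ! (m - 1)) (is0 ! (m - 1)) = (ys' ! (m - 1)) (is0 ! (m - 1))"
      using p1 p1nz by simp
    have call: "(ys ! j) (is0 ! j) = (ys' ! j) (is0 ! j)" if "j < m" for j
    proof (cases "j < m - 1")
      case True then show ?thesis by (rule c1)
    next
      case False then have "j = m - 1" using that by arith
      then show ?thesis using last by simp
    qed
    show "ys = ys'"
    proof (rule nth_equalityI)
      show "length ys = length ys'" using y y' by simp
      fix i assume "i < length ys"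
      then have i: "i < m" using y by simp
      have pr: "(\<Prod>j\<in>{..<m} - {i}. (ys ! j) (is0 ! j)) = (\<Prod>j\<in>{..<m} - {i}. (ys' ! j) (is0 ! j))"
        using call by (intro prod.cong) auto
      have prnz: "(\<Prod>j\<in>{..<m} - {i}. (ys ! j) (is0 ! j)) \<noteq> 0"
        using cnz[OF y] by (auto simp: prod_zero_iff)
      show "ys ! i = ys' ! i"
      proof
        fix a
        have "(ys ! i) a * (\<Prod>j\<in>{..<m} - {i}. (ys ! j) (is0 ! j))
            = (ys' ! i) a * (\<Prod>j\<in>{..<m} - {i}. (ys' ! j) (is0 ! j))"
          using ptensor_slice[of ys m is0 i a] ptensor_slice[of ys' m is0 i a] y y' li i by simp
        then show "(ys ! i) a = (ys' ! i) a" using pr prnz by simp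
      qed
    qed
  qed
  have "card ?F \<le> card ?T"
    by (rule card_inj_on_le[OF ginj gT]) (simp add: finite_lists_length_eq)
  also have "\<dots> = (card (UNIV::'a set) - 1) ^ (m - 1)"
    using card_lists_length_eq[of "UNIV - {0::'a}" "m - 1"] by simp
  finally show ?thesis .
qed

lemma count_nonzero_tensors:
  fixes E0 :: "(nat \<Rightarrow> 'a::{finite,field}) set"
  assumes fin: "finite E0" and nz: "\<forall>x\<in>E0. x \<noteq> 0" and m: "m \<ge> 1"
  shows "card E0 ^ m \<le> card (ptensor ` {ys. set ys \<subseteq> E0 \<and> length ys = m}) * (card (UNIV::'a set) - 1) ^ (m - 1)"
proof -
  let ?L = "{ys. set ys \<subseteq> E0 \<and> length ys = m}"
  let ?I = "ptensor ` ?L"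
  have fL: "finite ?L" using finite_lists_length_eq[OF fin] .
  have "card E0 ^ m = card ?L" using card_lists_length_eq[OF fin] by simp
  also have "?L = (\<Union>W\<in>?I. {ys. length ys = m \<and> set ys \<subseteq> E0 \<and> ptensor ys = W})" by auto
  also have "card \<dots> \<le> (\<Sum>W\<in>?I. card {ys. length ys = m \<and> set ys \<subseteq> E0 \<and> ptensor ys = W})"
    by (rule card_UN_le) (use fL in simp)
  also have "\<dots> \<le> card ?I * (card (UNIV::'a set) - 1) ^ (m - 1)"
    using sum_bounded_above[of "?I" "\<lambda>W. card {ys. length ys = m \<and> set ys \<subseteq> E0 \<and> ptensor ys = W}"
        "(card (UNIV::'a set) - 1) ^ (m - 1)"] fiber_bound[OF m nz] by simp
  finally show ?thesis .
qed

lemma convex_pow: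
  fixes a Q :: real
  assumes a: "a \<ge> 0" and Q: "Q > 0" and m: "m \<ge> 1"
  shows "(Q * a + 1) ^ m \<le> (Q + 1) ^ (m - 1) * (Q * a ^ m + 1)"
  using m
proof (induction m rule: dec_induct)
  case base then show ?case by simp
next
  case (step m)
  have key: "(Q * a ^ m + 1) * (Q * a + 1) \<le> (Q + 1) * (Q * a ^ Suc m + 1)"
  proof -
    have "(a ^ m - 1) * (a - 1) \<ge> 0"
    proof (cases "a \<ge> 1")
      case True then have "a ^ m \<ge> 1" by (rule one_le_power)
      with True show ?thesis by simp
    next
      case False then have "a ^ m \<le> 1" using a by (intro power_le_one) auto
      with False show ?thesis by (simp add: mult_nonpos_nonpos)
    qed
    then have "Q * ((a ^ m - 1) * (a - 1)) \<ge> 0" using Q by simp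
    then show ?thesis by (simp add: algebra_simps)
  qed
  have "(Q * a + 1) ^ Suc m = (Q * a + 1) ^ m * (Q * a + 1)" by simp
  also have "\<dots> \<le> (Q + 1) ^ (m - 1) * (Q * a ^ m + 1) * (Q * a + 1)"
    using step.IH a Q by (intro mult_right_mono) auto
  also have "\<dots> \<le> (Q + 1) ^ (m - 1) * ((Q + 1) * (Q * a ^ Suc m + 1))"
    unfolding mult.assoc using key Q by (intro mult_left_mono) auto
  also have "\<dots> = (Q + 1) ^ (Suc m - 1) * (Q * a ^ Suc m + 1)"
    using step.hyps by (cases m) auto
  finally show ?case .
qed

lemma boxpow_card_bound:
  fixes E :: "(nat \<Rightarrow> 'a::{finite,field}) set"
  assumes fin: "finite E" and m: "m \<ge> 1"
  shows "real (card E) ^ m \<le> real (card (boxpow E m)) * real (card (UNIV::'a set)) ^ (m - 1)"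
proof -
  define q where "q = card (UNIV::'a set)"
  have q2: "q \<ge> 2" unfolding q_def
  proof -
    have "{0::'a, 1} \<subseteq> UNIV" by simp
    then have "card {0::'a, 1} \<le> card (UNIV::'a set)" by (intro card_mono) auto
    then show "2 \<le> card (UNIV::'a set)" by simp
  qed
  define E0 where "E0 = E - {0}"
  let ?L = "{ys. set ys \<subseteq> E0 \<and> length ys = m}"
  let ?I = "ptensor ` ?L"
  have fE0: "finite E0" using fin by (simp add: E0_def)
  have nz: "\<forall>x\<in>E0. x \<noteq> 0" by (simp add: E0_def)
  have cnt: "card E0 ^ m \<le> card ?I * (q - 1) ^ (m - 1)"
    unfolding q_def by (rule count_nonzero_tensors[OF fE0 nz m])
  have cntR: "real (card E0) ^ m \<le> real (card ?I) * (real q - 1) ^ (m - 1)"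
  proof -
    have "real (card E0 ^ m) \<le> real (card ?I * (q - 1) ^ (m - 1))" using cnt by linarith
    then show ?thesis using q2 by (simp add: of_nat_diff)
  qed
  have Isub: "?I \<subseteq> boxpow E m" by (auto simp: boxpow_def E0_def)
  have fB: "finite (boxpow E m)"
  proof -
    have "boxpow E m = ptensor ` {ys. set ys \<subseteq> E \<and> length ys = m}" by (auto simp: boxpow_def)
    then show ?thesis using finite_lists_length_eq[OF fin] by simp
  qed
  have I0: "0 \<notin> ?I"
  proof
    assume "0 \<in> ?I"
    then obtain ys where "set ys \<subseteq> E0" "ptensor ys = 0" by auto
    then show False using ptensor_nz[of ys] nz by auto
  qed
  have qpos: "real q - 1 > 0" using q2 by simp
  show ?thesis
  proof (cases "0 \<in> E")
    case False
    then have "E0 = E" by (simp add: E0_def)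
    then have "real (card E) ^ m \<le> real (card ?I) * (real q - 1) ^ (m - 1)" using cntR by simp
    also have "\<dots> \<le> real (card (boxpow E m)) * real q ^ (m - 1)"
      using card_mono[OF fB Isub] qpos by (intro mult_mono power_mono) auto
    finally show ?thesis unfolding q_def .
  next
    case True
    have cE: "card E = card E0 + 1" using True fin unfolding E0_def by (metis Suc_eq_plus1 card_Suc_Diff1)
    have z: "ptensor (replicate m 0) = (0 :: nat list \<Rightarrow> 'a)"
      using m by (auto simp: ptensor_def fun_eq_iff)
    have "0 \<in> boxpow E m" unfolding boxpow_def using True z
      by (auto intro!: exI[of _ "replicate m 0"])
    then have "insert 0 ?I \<subseteq> boxpow E m" using Isub by blast
    then have "card (insert 0 ?I) \<le> card (boxpow E m)" by (rule card_mono[OF fB])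
    moreover have "card (insert 0 ?I) = card ?I + 1"
      using I0 finite_subset[OF Isub fB] by simp
    ultimately have cB: "real (card ?I) + 1 \<le> real (card (boxpow E m))" by linarith
    define a where "a = real (card E0) / (real q - 1)"
    have a0: "a \<ge> 0" using qpos by (simp add: a_def)
    have e1: "(real q - 1) * a = real (card E0)" using qpos by (simp add: a_def)
    have e2: "(real q - 1) * a ^ m = real (card E0) ^ m / (real q - 1) ^ (m - 1)"
    proof -
      have "(real q - 1) * a ^ m = (real q - 1) * real (card E0) ^ m / (real q - 1) ^ m"
        by (simp add: a_def power_divide)
      also have "(real q - 1) ^ m = (real q - 1) * (real q - 1) ^ (m - 1)"
        using m by (cases m) auto
      finally show ?thesis using qpos by simp
    qed
    have le1: "real (card E0) ^ m / (real q - 1) ^ (m - 1) \<le> real (card ?I)"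
      using cntR qpos by (simp add: divide_le_eq mult.commute)
    have "real (card E) ^ m = ((real q - 1) * a + 1) ^ m" using cE e1 by (simp add: add.commute)
    also have "\<dots> \<le> ((real q - 1) + 1) ^ (m - 1) * ((real q - 1) * a ^ m + 1)"
      by (rule convex_pow[OF a0 qpos m])
    also have "\<dots> = real q ^ (m - 1) * ((real q - 1) * a ^ m + 1)" by simp
    also have "\<dots> \<le> real q ^ (m - 1) * (real (card ?I) + 1)"
      unfolding e2 using le1 q2 by (intro mult_left_mono) auto
    also have "\<dots> \<le> real q ^ (m - 1) * real (card (boxpow E m))"
      using cB by (intro mult_left_mono) auto
    finally show ?thesis unfolding q_def by (simp add: mult.commute)
  qed
qed

lemma sum_ind_card: "finite A \<Longrightarrow> (\<Sum>x\<in>A. if P x then 1 else 0 :: real) = real (card {x\<in>A. P x})"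
  by (simp add: sum.inter_filter[symmetric])

lemma fscale_eq_self: "y \<noteq> 0 \<Longrightarrow> fscale c y = y \<Longrightarrow> c = (1::'a::field)"
proof -
  assume y: "y \<noteq> 0" and e: "fscale c y = y"
  obtain i where "y i \<noteq> 0" using y by (auto simp: fun_eq_iff)
  moreover have "c * y i = y i" using fun_cong[OF e, of i] by (simp only: fscale_def)
  ultimately show ?thesis using mult_cancel_right2 by metis
qed

lemma fscale_inj: "y \<noteq> 0 \<Longrightarrow> inj (\<lambda>c. fscale c (y :: 'b \<Rightarrow> 'a::field))"
proof (rule injI)
  fix a b assume y: "y \<noteq> 0" and e: "fscale a y = fscale b y"
  obtain i where "y i \<noteq> 0" using y by (auto simp: fun_eq_iff)
  moreover have "a * y i = b * y i" using fun_cong[OF e, of i] by (simp only: fscale_def)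
  ultimately show "a = b" using mult_cancel_right by metis
qed

lemma card_scalings:
  fixes E :: "('b \<Rightarrow> 'a::{finite,field}) set"
  assumes y: "y \<in> E" "y \<noteq> 0" and fin: "finite E"
  shows "real (card {y'\<in>E. \<exists>c. y' = fscale c y}) =
    real (card {c \<in> UNIV - {0, 1}. fscale c y \<in> E}) + 1 + (if 0 \<in> E then 1 else 0)"
proof -
  have "{y'\<in>E. \<exists>c. y' = fscale c y} = (\<lambda>c. fscale c y) ` {c. fscale c y \<in> E}" by auto
  then have "card {y'\<in>E. \<exists>c. y' = fscale c y} = card {c. fscale c y \<in> E}"
    using card_image[OF inj_on_subset[OF fscale_inj[OF y(2)]], of "{c. fscale c y \<in> E}"] by simp
  moreover have "{c. fscale c y \<in> E} = {c \<in> UNIV - {0, 1}. fscale c y \<in> E} \<union> {1} \<union> (if 0 \<in> E then {0} else {})"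
    using y(1) by (auto simp: fscale_def zero_fun_def)
  moreover have "card ({c \<in> UNIV - {0, 1}. fscale c y \<in> E} \<union> {1} \<union> (if 0 \<in> E then {0} else {}))
     = card {c \<in> UNIV - {0, 1::'a}. fscale c y \<in> E} + 1 + (if 0 \<in> E then 1 else 0)"
    by (auto simp: card_insert_if)
  ultimately show ?thesis by simp
qed

lemma ring_id: "(a::real) + b * (c - 1 - d) = (a + b * (c - 1)) - b * d"
  by (simp add: algebra_simps)

lemma count_core:
  fixes \<phi> :: "(nat \<Rightarrow> 'a::{finite,field}) \<Rightarrow> (nat list \<Rightarrow> 'a) \<Rightarrow> 'a"
    and E :: "(nat \<Rightarrow> 'a) set" and A :: "(nat list \<Rightarrow> 'a) set" and t :: 'a and Nr q :: real
  assumes finE: "finite E" and finA: "finite A" and t: "t \<noteq> 0"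
    and phi0: "\<And>T. \<phi> 0 T = 0"
    and phisc: "\<And>c y T. y \<in> E \<Longrightarrow> T \<in> A \<Longrightarrow> \<phi> (fscale c y) T = c * \<phi> y T"
    and f1: "\<And>y v. y \<in> E \<Longrightarrow> y \<noteq> 0 \<Longrightarrow> real (card {T\<in>A. \<phi> y T = v}) = Nr / q"
    and f2: "\<And>y y' v1 v2. y \<in> E \<Longrightarrow> y' \<in> E \<Longrightarrow> y \<noteq> 0 \<Longrightarrow> (\<forall>c. y' \<noteq> fscale c y) \<Longrightarrow>
               real (card {T\<in>A. \<phi> y T = v1 \<and> \<phi> y' T = v2}) = Nr / q^2"
  defines "h \<equiv> \<lambda>T. (\<Sum>y\<in>E. if \<phi> y T = t then 1 else 0 :: real)"
  defines "p \<equiv> \<lambda>y. real (card {c \<in> UNIV - {0, 1}. fscale c y \<in> E})"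
  shows "(\<Sum>T\<in>A. h T) = real (card (E - {0})) * Nr / q"
    and "(\<Sum>T\<in>A. (h T)^2) = real (card (E - {0})) * Nr / q
           + Nr / q^2 * (real (card (E - {0})) ^ 2 - real (card (E - {0})) - (\<Sum>y\<in>E - {0}. p y))"
proof -
  let ?e = "real (card (E - {0}))"
  have c0: "card {T\<in>A. \<phi> 0 T = t} = 0" using phi0 t by simp
  have "(\<Sum>T\<in>A. h T) = (\<Sum>y\<in>E. \<Sum>T\<in>A. if \<phi> y T = t then 1 else 0 :: real)"
    unfolding h_def by (rule sum.swap)
  also have "\<dots> = (\<Sum>y\<in>E. if y \<noteq> 0 then Nr / q else 0)"
  proof (rule sum.cong[OF refl])
    fix y assume "y \<in> E"
    then show "(\<Sum>T\<in>A. if \<phi> y T = t then 1 else 0 :: real) = (if y \<noteq> 0 then Nr / q else 0)"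
      using f1[of y t] c0 by (simp add: sum_ind_card[OF finA])
  qed
  also have "\<dots> = ?e * Nr / q"
    using finE by (simp add: sum.inter_filter[symmetric] set_diff_eq)
  finally show "(\<Sum>T\<in>A. h T) = ?e * Nr / q" .
  define cnt where "cnt y y' = real (card {T\<in>A. \<phi> y T = t \<and> \<phi> y' T = t})" for y y'
  have "(\<Sum>T\<in>A. (h T)^2) = (\<Sum>T\<in>A. \<Sum>y\<in>E. \<Sum>y'\<in>E. if \<phi> y T = t \<and> \<phi> y' T = t then 1 else 0 :: real)"
    unfolding h_def power2_eq_square sum_product by (intro sum.cong refl) auto
  also have "\<dots> = (\<Sum>y\<in>E. \<Sum>T\<in>A. \<Sum>y'\<in>E. if \<phi> y T = t \<and> \<phi> y' T = t then 1 else 0 :: real)"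
    by (rule sum.swap)
  also have "\<dots> = (\<Sum>y\<in>E. \<Sum>y'\<in>E. cnt y y')"
  proof (rule sum.cong[OF refl])
    fix y assume "y \<in> E"
    have "(\<Sum>T\<in>A. \<Sum>y'\<in>E. if \<phi> y T = t \<and> \<phi> y' T = t then 1 else 0 :: real)
        = (\<Sum>y'\<in>E. \<Sum>T\<in>A. if \<phi> y T = t \<and> \<phi> y' T = t then 1 else 0 :: real)" by (rule sum.swap)
    also have "\<dots> = (\<Sum>y'\<in>E. cnt y y')" unfolding cnt_def
      by (intro sum.cong refl) (simp add: sum_ind_card[OF finA])
    finally show "(\<Sum>T\<in>A. \<Sum>y'\<in>E. if \<phi> y T = t \<and> \<phi> y' T = t then 1 else 0 :: real) = (\<Sum>y'\<in>E. cnt y y')" .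
  qed
  also have "\<dots> = (\<Sum>y\<in>E. if y \<noteq> 0 then Nr / q + Nr / q^2 * (?e - 1 - p y) else 0)"
  proof (rule sum.cong[OF refl])
    fix y assume yE: "y \<in> E"
    show "(\<Sum>y'\<in>E. cnt y y') = (if y \<noteq> 0 then Nr / q + Nr / q^2 * (?e - 1 - p y) else 0)"
    proof (cases "y = 0")
      case True
      then show ?thesis using phi0 t by (simp add: cnt_def)
    next
      case False
      let ?D = "{y'\<in>E. \<exists>c. y' = fscale c y}"
      have yD: "y \<in> ?D" using yE by (auto intro!: exI[of _ 1] simp: fscale_def)
      have cD: "cnt y y' = (if y' = y then Nr / q else 0)" if y'D: "y' \<in> ?D" for y'
      proof -
        obtain c where c: "y' = fscale c y" using y'D by blast
        show ?thesis
        proof (cases "c = 1")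
          case True
          then have "y' = y" using c by (simp add: fscale_def)
          then show ?thesis using f1[OF yE False, of t] by (simp add: cnt_def)
        next
          case c1: False
          have "y' \<noteq> y" using fscale_eq_self[OF False, of c] c c1 by auto
          moreover have emp: "{T\<in>A. \<phi> y T = t \<and> \<phi> y' T = t} = {}"
          proof -
            have "\<phi> y' T \<noteq> t" if "T \<in> A" "\<phi> y T = t" for T
              using phisc[OF yE that(1), of c] c that(2) c1 t by auto
            then show ?thesis by blast
          qed
          ultimately show ?thesis unfolding cnt_def emp by simp
        qed
      qed
      have cND: "cnt y y' = Nr / q^2" if "y' \<in> E - ?D" for y'
        using that f2[OF yE _ False] unfolding cnt_def by blast
      have fD: "finite ?D" using finE by simp
      have "(\<Sum>y'\<in>E. cnt y y') = (\<Sum>y'\<in>?D. cnt y y') + (\<Sum>y'\<in>E - ?D. cnt y y')"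
        using sum.subset_diff[of ?D E "cnt y"] finE by (simp add: add.commute)
      also have "(\<Sum>y'\<in>?D. cnt y y') = (\<Sum>y'\<in>?D. if y' = y then Nr / q else 0)"
        using cD by (rule sum.cong[OF refl])
      also have "\<dots> = Nr / q" using yD fD by (simp add: sum.delta)
      also have "(\<Sum>y'\<in>E - ?D. cnt y y') = real (card (E - ?D)) * (Nr / q^2)"
        using cND by simp
      finally have s1: "(\<Sum>y'\<in>E. cnt y y') = Nr / q + real (card (E - ?D)) * (Nr / q^2)" .
      have s2: "real (card (E - ?D)) = real (card E) - real (card ?D)"
        using card_Diff_subset[OF fD] card_mono[OF finE] by (simp add: of_nat_diff)
      have s3: "real (card E) = ?e + (if 0 \<in> E then 1 else 0)"
      proof (cases "0 \<in> E")
        case True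
        then have "card E = card (E - {0}) + 1" using finE by (metis Suc_eq_plus1 card_Suc_Diff1)
        then show ?thesis using True by simp
      next
        case False then show ?thesis by simp
      qed
      have s4: "real (card ?D) = p y + 1 + (if 0 \<in> E then 1 else 0)"
        unfolding p_def by (rule card_scalings[OF yE False finE])
      have s5: "real (card (E - ?D)) = ?e - 1 - p y" using s2 s3 s4 by linarith
      show ?thesis using False unfolding s1 s5 by (simp add: algebra_simps)
    qed
  qed
  also have "\<dots> = (\<Sum>y\<in>E - {0}. Nr / q + Nr / q^2 * (?e - 1 - p y))"
    unfolding sum.inter_filter[OF finE, symmetric] by (rule sum.cong) auto
  also have "\<dots> = (\<Sum>y\<in>E - {0}. (Nr / q + Nr / q^2 * (?e - 1)) - Nr / q^2 * p y)"
    by (rule sum.cong[OF refl]) (rule ring_id)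
  also have "\<dots> = ?e * (Nr / q + Nr / q^2 * (?e - 1)) - Nr / q^2 * (\<Sum>y\<in>E - {0}. p y)"
    by (simp add: sum_subtractf sum_distrib_left)
  also have "\<dots> = ?e * Nr / q + Nr / q^2 * (?e * ?e - ?e - (\<Sum>y\<in>E - {0}. p y))"
    by (simp add: algebra_simps)
  finally show "(\<Sum>T\<in>A. (h T)^2) = ?e * Nr / q + Nr / q^2 * (?e ^ 2 - ?e - (\<Sum>y\<in>E - {0}. p y))"
    by (simp add: power2_eq_square)
qed

lemma final_arith:
  fixes s N e P0 Q qr z :: real
  assumes qr: "qr \<ge> 3" and N: "N > 0" "N \<le> Q" and s: "s \<ge> 0" "s \<le> N"
    and e: "e \<ge> 0" and P: "0 \<le> P0" "P0 \<le> (qr - 2) * e" and z: "z = 0 \<or> z = 1"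
    and CS: "(e * N / qr)^2 \<le> (N - s) * (e * N / qr + N / qr^2 * (e^2 - e - P0))"
    and main: "s * (e + z)^2 > Q * (qr * (e + z) - (P0 + z * (qr - 2)))"
  shows False
proof -
  define U where "U = (qr - 1) * e - P0"
  have Ue: "U \<ge> e" using P by (simp add: U_def algebra_simps)
  have qpos: "qr > 0" using qr by simp
  have "(e * N / qr)^2 = N * (N * e^2) / qr^2" by (simp add: power2_eq_square)
  moreover have "(N - s) * (e * N / qr + N / qr^2 * (e^2 - e - P0)) = N * ((N - s) * (e^2 + U)) / qr^2"
    using qpos by (simp add: U_def field_simps power2_eq_square)
  ultimately have "N * (N * e^2) / qr^2 \<le> N * ((N - s) * (e^2 + U)) / qr^2" using CS by simp
  then have "N * (N * e^2) \<le> N * ((N - s) * (e^2 + U))" using qpos by (simp add: divide_le_cancel)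
  then have "N * e^2 \<le> (N - s) * (e^2 + U)" using N(1) by simp
  then have k1: "s * (e^2 + U) \<le> N * U" by (simp add: algebra_simps)
  have "N * U \<le> Q * U" using N Ue e by (intro mult_right_mono) auto
  with k1 have k: "s * (e^2 + U) \<le> Q * U" by linarith
  have Q0: "Q > 0" using N by simp
  from z show False
  proof
    assume z0: "z = 0"
    then have m: "s * e^2 > Q * (U + e)" using main by (simp add: U_def algebra_simps)
    have "Q * U \<le> Q * (U + e)" using Q0 e by simp
    moreover have "s * e^2 \<le> s * (e^2 + U)" using s Ue e by (intro mult_left_mono) auto
    ultimately show False using m k by linarith
  next
    assume z1: "z = 1"
    then have m: "s * (e + 1)^2 > Q * (U + e + 2)" using main by (simp add: U_def algebra_simps)
    show False
    proof (cases "U = 0")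
      case True
      then have "e = 0" using Ue e by simp
      then have "s > Q * 2" using m True by simp
      then show False using s N Q0 by linarith
    next
      case False
      then have Upos: "U > 0" using Ue e by simp
      have ineq: "U * (e + 1)^2 \<le> (e^2 + U) * (U + e + 2)"
      proof -
        have d: "(e^2 + U) * (U + e + 2) - U * (e + 1)^2 = e^3 + 2 * e^2 + U * (U - e + 1)"
          by (simp add: algebra_simps power2_eq_square power3_eq_cube)
        have h1: "U * (U - e + 1) \<ge> 0" using Upos Ue by simp
        have h2: "e^3 \<ge> 0" using e by simp
        have h3: "e^2 \<ge> 0" by simp
        show ?thesis using d h1 h2 h3 by linarith
      qed
      have "s * (e^2 + U) * (U + e + 2) \<le> Q * U * (U + e + 2)"
        using k Upos e by (intro mult_right_mono) auto
      also have "\<dots> < s * (e + 1)^2 * U" using m Upos by (simp add: mult.commute mult.left_commute)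
      also have "\<dots> = s * (U * (e + 1)^2)" by (simp add: algebra_simps)
      also have "\<dots> \<le> s * ((e^2 + U) * (U + e + 2))" using ineq s by (intro mult_left_mono) auto
      finally show False by (simp add: algebra_simps)
    qed
  qed
qed



lemma phi_pair_surj:
  fixes \<phi> :: "(nat \<Rightarrow> 'a::field) \<Rightarrow> (nat list \<Rightarrow> 'a) \<Rightarrow> 'a"
  assumes AS3: "\<And>c a. a \<in> A \<Longrightarrow> fscale c a \<in> A" and AS2: "\<And>a b. a \<in> A \<Longrightarrow> b \<in> A \<Longrightarrow> a + b \<in> A"
    and phiadd: "\<And>y a b. y \<in> V \<Longrightarrow> a \<in> A \<Longrightarrow> b \<in> A \<Longrightarrow> \<phi> y (a + b) = \<phi> y a + \<phi> y b"
    and phisc: "\<And>y c a. y \<in> V \<Longrightarrow> a \<in> A \<Longrightarrow> \<phi> y (fscale c a) = c * \<phi> y a"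
    and philin: "\<And>y1 y2 a b T. y1 \<in> V \<Longrightarrow> y2 \<in> V \<Longrightarrow> T \<in> A \<Longrightarrow>
        \<phi> (fscale a y1 + fscale b y2) T = a * \<phi> y1 T + b * \<phi> y2 T"
    and nd: "\<And>y. y \<in> B \<Longrightarrow> y \<noteq> 0 \<Longrightarrow> \<exists>a\<in>A. \<phi> y a \<noteq> 0"
    and BS2: "\<And>a b. a \<in> B \<Longrightarrow> b \<in> B \<Longrightarrow> a + b \<in> B" and BS3: "\<And>c a. a \<in> B \<Longrightarrow> fscale c a \<in> B"
    and BV: "B \<subseteq> V"
    and y: "y \<in> B" "y' \<in> B" "y \<noteq> 0" "\<forall>c. y' \<noteq> fscale c y"
  shows "\<exists>T\<in>A. \<phi> y T = va \<and> \<phi> y' T = vb"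
proof -
  have yV: "y \<in> V" "y' \<in> V" using y BV by auto
  obtain a1 where a1: "a1 \<in> A" "\<phi> y a1 \<noteq> 0" using nd[OF y(1) y(3)] by blast
  define g where "g = \<phi> y a1"
  define dl where "dl = \<phi> y' a1"
  define u where "u = fscale (- dl) y + fscale g y'"
  have uB: "u \<in> B" unfolding u_def using BS2 BS3 y by blast
  have u0: "u \<noteq> 0"
  proof
    assume "u = 0"
    then have "\<And>i. - dl * y i + g * y' i = 0" unfolding u_def by (simp add: fscale_def fun_eq_iff)
    then have "\<And>i. y' i = (dl / g) * y i" using a1(2) unfolding g_def
      by (simp add: field_simps)
    then have "y' = fscale (dl / g) y" by (simp add: fscale_def fun_eq_iff)
    then show False using y(4) by blast
  qed
  obtain a2 where a2: "a2 \<in> A" "\<phi> u a2 \<noteq> 0" using nd[OF uB u0] by blast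
  define r1 where "r1 = \<phi> y a2"
  define r2 where "r2 = \<phi> y' a2"
  define D where "D = g * r2 - dl * r1"
  have pu: "\<phi> u a2 = - dl * r1 + g * r2" unfolding u_def r1_def r2_def by (rule philin[OF yV a2(1)])
  have D: "D \<noteq> 0" using a2(2) unfolding pu D_def by (simp add: algebra_simps)
  define la where "la = (va * r2 - vb * r1) / D"
  define mu where "mu = (g * vb - dl * va) / D"
  define T where "T = fscale la a1 + fscale mu a2"
  have TA: "T \<in> A" unfolding T_def using AS2 AS3 a1(1) a2(1) by blast
  have "\<phi> y T = la * g + mu * r1" unfolding T_def g_def r1_def
    using phiadd[OF yV(1) AS3[OF a1(1)] AS3[OF a2(1)]] phisc[OF yV(1) a1(1)] phisc[OF yV(1) a2(1)] by simp
  also have "\<dots> = ((va * r2 - vb * r1) * g + (g * vb - dl * va) * r1) / D"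
    unfolding la_def mu_def by (simp add: add_divide_distrib)
  also have "(va * r2 - vb * r1) * g + (g * vb - dl * va) * r1 = va * D" unfolding D_def by (simp add: algebra_simps)
  also have "va * D / D = va" using D by simp
  finally have 1: "\<phi> y T = va" .
  have "\<phi> y' T = la * dl + mu * r2" unfolding T_def dl_def r2_def
    using phiadd[OF yV(2) AS3[OF a1(1)] AS3[OF a2(1)]] phisc[OF yV(2) a1(1)] phisc[OF yV(2) a2(1)] by simp
  also have "\<dots> = ((va * r2 - vb * r1) * dl + (g * vb - dl * va) * r2) / D"
    unfolding la_def mu_def by (simp add: add_divide_distrib)
  also have "(va * r2 - vb * r1) * dl + (g * vb - dl * va) * r2 = vb * D" unfolding D_def by (simp add: algebra_simps)
  also have "vb * D / D = vb" using D by simp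
  finally have 2: "\<phi> y' T = vb" .
  show ?thesis using TA 1 2 by blast
qed

theorem mainTheorem1:
  fixes w :: "(nat list \<Rightarrow> 'a::{finite,field}) \<Rightarrow> 'a"
    and E B :: "(nat \<Rightarrow> 'a) set"
    and A :: "(nat list \<Rightarrow> 'a) set"
    and d n r k :: nat and \<alpha> :: real
  assumes q3: "card (UNIV :: 'a set) \<ge> 3"
    and n2: "n \<ge> 2"
    and form: "nlinear_form d n w"
    and EV: "E \<subseteq> vecs d"
    and pidx: "has_proj_index E \<alpha>"
    and AT: "A \<subseteq> tens d (n - 1)" and Asub: "module.subspace fscale A"
    and Adim: "vector_space.dim fscale A = r"
    and BV: "B \<subseteq> vecs d" and Bsub: "module.subspace fscale B"
    and k: "k \<in> {1..n}"
    and h1: "boxpow E (n - 1) \<subseteq> A"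
    and h2: "E \<subseteq> B"
    and h3: "nondeg n w A B k"
    and h4: "real (card E) > real (card (UNIV :: 'a set)) powr ((real r + real n - 1) / real n)
                * (1 - \<alpha> * (1 - 2 / real (card (UNIV :: 'a set)))) powr (1 / real n)"
  shows "UNIV - {0} \<subseteq> form_image w E n"
proof
  fix t assume tU: "t \<in> UNIV - {0::'a}"
  then have t0: "t \<noteq> 0" by simp
  show "t \<in> form_image w E n"
  proof (rule ccontr)
    assume tn: "t \<notin> form_image w E n"
    define q where "q = card (UNIV :: 'a set)"
    define qr where "qr = real q"
    have q3': "qr \<ge> 3" using q3 by (simp add: qr_def q_def)
    have finE: "finite E" using finite_subset[OF EV finite_vecs] .
    have finA: "finite A" using finite_subset[OF AT finite_tens] .
    note AS = subspace_facts[OF Asub]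
    note BS = subspace_facts[OF Bsub]
    define N where "N = card A"
    have NQ: "N \<le> q ^ r" unfolding N_def q_def by (rule card_subspace_le[OF finA Adim])
    have N0: "N > 0" unfolding N_def using AS(1) finA card_gt_0_iff by blast
    define \<phi> where "\<phi> y T = w (insert_slot n k y T)" for y T
    have phiadd: "\<And>y a b. y \<in> vecs d \<Longrightarrow> a \<in> A \<Longrightarrow> b \<in> A \<Longrightarrow> \<phi> y (a + b) = \<phi> y a + \<phi> y b"
      unfolding \<phi>_def using phi_addT[OF form _ _ _ k] AT by blast
    have phisc: "\<And>y c a. y \<in> vecs d \<Longrightarrow> a \<in> A \<Longrightarrow> \<phi> y (fscale c a) = c * \<phi> y a"
      unfolding \<phi>_def using phi_scaleT[OF form _ _ k] AT by blast
    have philin: "\<And>y1 y2 a b T. y1 \<in> vecs d \<Longrightarrow> y2 \<in> vecs d \<Longrightarrow> T \<in> A \<Longrightarrow>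
        \<phi> (fscale a y1 + fscale b y2) T = a * \<phi> y1 T + b * \<phi> y2 T"
      unfolding \<phi>_def using phi_lin_y[OF form _ _ _ k] AT by blast
    have phi0: "\<And>T. \<phi> 0 T = 0" unfolding \<phi>_def by (rule phi_zero_y[OF form])
    have phiscy: "\<And>c y T. y \<in> E \<Longrightarrow> T \<in> A \<Longrightarrow> \<phi> (fscale c y) T = c * \<phi> y T"
    proof -
      fix c y T assume yE: "y \<in> E" and TA: "T \<in> A"
      have "fscale c y + fscale 0 y = fscale c y" by (simp add: fscale_def fun_eq_iff)
      then show "\<phi> (fscale c y) T = c * \<phi> y T" using philin[of y y T c 0] yE EV TA by auto
    qed
    have nd: "\<And>y. y \<in> B \<Longrightarrow> y \<noteq> 0 \<Longrightarrow> \<exists>a\<in>A. \<phi> y a \<noteq> 0"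
      using h3 unfolding nondeg_def \<phi>_def zero_fun_def by blast
    have qpos: "qr > 0" using q3' by simp
    have f1: "\<And>y v. y \<in> E \<Longrightarrow> y \<noteq> 0 \<Longrightarrow> real (card {T\<in>A. \<phi> y T = v}) = real N / qr"
    proof -
      fix y v assume yE: "y \<in> E" and y0: "y \<noteq> 0"
      have yV: "y \<in> vecs d" using yE EV by auto
      obtain a1 where a1: "a1 \<in> A" "\<phi> y a1 \<noteq> 0" using nd[OF _ y0] yE h2 by blast
      have surj: "\<exists>a\<in>A. \<phi> y a = u" for u
      proof
        show "fscale (u / \<phi> y a1) a1 \<in> A" using AS(3) a1(1) by blast
        show "\<phi> y (fscale (u / \<phi> y a1) a1) = u" using phisc[OF yV a1(1)] a1(2) by simp
      qed
      have "card A = card (UNIV::'a set) * card {a\<in>A. \<phi> y a = v}"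
        by (rule fiber_card[OF finA Asub]) (use phiadd[OF yV] surj in auto)
      then have "real N = qr * real (card {T\<in>A. \<phi> y T = v})" unfolding N_def qr_def q_def
        by (metis of_nat_mult)
      then show "real (card {T\<in>A. \<phi> y T = v}) = real N / qr" using qpos by (simp add: field_simps)
    qed
    have f2: "\<And>y y' v1 v2. y \<in> E \<Longrightarrow> y' \<in> E \<Longrightarrow> y \<noteq> 0 \<Longrightarrow> (\<forall>c. y' \<noteq> fscale c y) \<Longrightarrow>
               real (card {T\<in>A. \<phi> y T = v1 \<and> \<phi> y' T = v2}) = real N / qr^2"
    proof -
      fix y y' v1 v2 assume yE: "y \<in> E" and y'E: "y' \<in> E" and y0: "y \<noteq> 0" and ind: "\<forall>c. y' \<noteq> fscale c y"
      have yV: "y \<in> vecs d" "y' \<in> vecs d" using yE y'E EV by auto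
      have surj: "\<exists>a\<in>A. (\<lambda>T. (\<phi> y T, \<phi> y' T)) a = u" for u :: "'a \<times> 'a"
      proof -
        obtain T where "T \<in> A" "\<phi> y T = fst u" "\<phi> y' T = snd u"
          using phi_pair_surj[where A=A and \<phi>=\<phi> and V="vecs d" and B=B and y=y and y'=y' and va="fst u" and vb="snd u", OF AS(3) AS(2) phiadd phisc philin nd BS(2) BS(3) BV]
            yE y'E h2 y0 ind by blast
        then show ?thesis by (intro bexI[of _ T]) auto
      qed
      have add2: "\<And>a b. a \<in> A \<Longrightarrow> b \<in> A \<Longrightarrow> (\<lambda>T. (\<phi> y T, \<phi> y' T)) (a + b) = (\<lambda>T. (\<phi> y T, \<phi> y' T)) a + (\<lambda>T. (\<phi> y T, \<phi> y' T)) b"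
        using phiadd[OF yV(1)] phiadd[OF yV(2)] by simp
      have "card A = card (UNIV::('a \<times> 'a) set) * card {a\<in>A. (\<lambda>T. (\<phi> y T, \<phi> y' T)) a = (v1, v2)}"
        by (rule fiber_card[OF finA Asub add2 surj])
      moreover have "card (UNIV::('a \<times> 'a) set) = q * q"
        unfolding q_def UNIV_Times_UNIV[symmetric] card_cartesian_product by simp
      moreover have "{a\<in>A. (\<lambda>T. (\<phi> y T, \<phi> y' T)) a = (v1, v2)} = {T\<in>A. \<phi> y T = v1 \<and> \<phi> y' T = v2}" by simp
      ultimately have "real N = qr^2 * real (card {T\<in>A. \<phi> y T = v1 \<and> \<phi> y' T = v2})"
        unfolding N_def qr_def by (simp add: power2_eq_square)
      then show "real (card {T\<in>A. \<phi> y T = v1 \<and> \<phi> y' T = v2}) = real N / qr^2" using qpos by (simp add: field_simps)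
    qed
    note cc = count_core[OF finE finA t0 phi0 phiscy f1 f2]
    define h where "h T = (\<Sum>y\<in>E. if \<phi> y T = t then 1 else 0 :: real)" for T
    define p where "p y = real (card {c \<in> UNIV - {0, 1}. fscale c y \<in> E})" for y
    define e where "e = real (card (E - {0}))"
    define P0 where "P0 = (\<Sum>y\<in>E - {0}. p y)"
    have H1: "(\<Sum>T\<in>A. h T) = e * real N / qr" using cc(1) unfolding h_def e_def .
    have H2: "(\<Sum>T\<in>A. (h T)^2) = e * real N / qr + real N / qr^2 * (e^2 - e - P0)"
      using cc(2) unfolding h_def e_def P0_def p_def .
    define S where "S = boxpow E (n - 1)"
    have finS: "finite S" using finite_subset[OF h1 finA] unfolding S_def .
    have hS: "h T = 0" if TS: "T \<in> S" for T
    proof -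
      obtain xs where xs: "T = ptensor xs" "length xs = n - 1" "set xs \<subseteq> E"
        using TS unfolding S_def boxpow_def by blast
      have "\<phi> y T \<noteq> t" if yE: "y \<in> E" for y
      proof -
        let ?L = "take (k - 1) xs @ y # drop (k - 1) xs"
        have "\<phi> y T = w (ptensor ?L)" unfolding \<phi>_def xs(1) insert_slot_ptensor[OF xs(2) k] ..
        moreover have "ptensor ?L \<in> boxpow E n" unfolding boxpow_def
        proof (intro CollectI exI conjI)
          show "length ?L = n" using xs(2) k by auto
          show "set ?L \<subseteq> E" using xs(3) yE set_take_subset[of "k - 1" xs] set_drop_subset[of "k - 1" xs] by auto
        qed simp
        ultimately show ?thesis using tn unfolding form_image_def by auto
      qed
      then show ?thesis unfolding h_def by simp
    qed
    define s where "s = real (card S)"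
    have SA: "S \<subseteq> A" using h1 unfolding S_def .
    have CS: "(e * real N / qr)^2 \<le> (real N - s) * (e * real N / qr + real N / qr^2 * (e^2 - e - P0))"
    proof -
      have "(\<Sum>T\<in>A. h T) = (\<Sum>T\<in>A - S. h T) + (\<Sum>T\<in>S. h T)" by (rule sum.subset_diff[OF SA finA])
      also have "(\<Sum>T\<in>S. h T) = 0" using hS by simp
      finally have e1: "(\<Sum>T\<in>A. h T) = (\<Sum>T\<in>A - S. h T)" by simp
      have "(\<Sum>T\<in>A - S. h T)^2 \<le> (\<Sum>T\<in>A - S. (h T)^2) * real (card (A - S))"
        by (rule sum_squared_le_sum_of_squares)
      also have "real (card (A - S)) = real N - s"
        unfolding N_def s_def using card_Diff_subset[OF finS SA] card_mono[OF finA SA] by (simp add: of_nat_diff)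
      also have "(\<Sum>T\<in>A - S. (h T)^2) * (real N - s) \<le> (\<Sum>T\<in>A. (h T)^2) * (real N - s)"
      proof (rule mult_right_mono)
        show "(\<Sum>T\<in>A - S. (h T)^2) \<le> (\<Sum>T\<in>A. (h T)^2)" by (rule sum_mono2[OF finA]) auto
        show "0 \<le> real N - s" unfolding N_def s_def using card_mono[OF finA SA] by simp
      qed
      finally show ?thesis using e1 H1 H2 by (simp add: mult.commute)
    qed
    define z where "z = (if 0 \<in> E then 1 else 0 :: real)"
    have Ec: "real (card E) = e + z"
    proof (cases "0 \<in> E")
      case True
      then have "card E = card (E - {0}) + 1" using finE by (metis Suc_eq_plus1 card_Suc_Diff1)
      then show ?thesis using True by (simp add: e_def z_def)
    next
      case False then show ?thesis by (simp add: e_def z_def)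
    qed
    have card01: "card (UNIV - {0, 1::'a}) = q - 2" unfolding q_def by (simp add: card_Diff_subset)
    have q2: "q \<ge> 2" using q3 unfolding q_def by simp
    have ple: "p y \<le> qr - 2" for y
    proof -
      have "card {c \<in> UNIV - {0, 1}. fscale c y \<in> E} \<le> card (UNIV - {0, 1::'a})" by (rule card_mono) auto
      then show ?thesis unfolding p_def qr_def card01 using q2 by (simp add: of_nat_diff)
    qed
    have p0: "p 0 = qr - 2" if "0 \<in> E"
    proof -
      have ee: "{c \<in> UNIV - {0, 1}. fscale c (0::nat \<Rightarrow> 'a) \<in> E} = UNIV - {0, 1}"
        using that by (auto simp: fscale_def zero_fun_def)
      show ?thesis unfolding p_def qr_def ee card01 using q2 by (simp add: of_nat_diff)
    qed
    define P where "P = real (card {(a, w). a \<in> UNIV - {0, 1} \<and> w \<in> E \<and> fscale a w \<in> E})"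
    have Psum: "P = (\<Sum>y\<in>E. p y)"
    proof -
      have "{(a, w). a \<in> UNIV - {0, 1} \<and> w \<in> E \<and> fscale a w \<in> E}
          = (\<lambda>(w, a). (a, w)) ` (SIGMA y:E. {c \<in> UNIV - {0, 1}. fscale c y \<in> E})" by auto
      moreover have "inj_on (\<lambda>(w, a). (a, w)) (SIGMA y:E. {c \<in> UNIV - {0, 1::'a}. fscale c y \<in> E})"
        by (auto simp: inj_on_def)
      ultimately have "card {(a, w). a \<in> UNIV - {0, 1} \<and> w \<in> E \<and> fscale a w \<in> E}
          = card (SIGMA y:E. {c \<in> UNIV - {0, 1::'a}. fscale c y \<in> E})" by (simp add: card_image)
      also have "\<dots> = (\<Sum>y\<in>E. card {c \<in> UNIV - {0, 1::'a}. fscale c y \<in> E})"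
        by (rule card_SigmaI[OF finE]) auto
      finally show ?thesis unfolding P_def p_def by simp
    qed
    have PP0: "P = P0 + z * (qr - 2)"
    proof (cases "0 \<in> E")
      case True
      have "(\<Sum>y\<in>E. p y) = (\<Sum>y\<in>E - {0}. p y) + p 0" using finE True by (simp add: sum.remove add.commute)
      then show ?thesis using Psum p0[OF True] True by (simp add: P0_def z_def)
    next
      case False
      then show ?thesis using Psum by (simp add: P0_def z_def)
    qed
    have P0le: "P0 \<le> (qr - 2) * e"
    proof -
      have "P0 \<le> real (card (E - {0})) * (qr - 2)" unfolding P0_def by (rule sum_bounded_above) (rule ple)
      then show ?thesis by (simp add: e_def mult.commute)
    qed
    have P0ge: "0 \<le> P0" unfolding P0_def p_def by (simp add: sum_nonneg)
    have Ple: "P \<le> (qr - 2) * real (card E)"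
    proof -
      have "P \<le> real (card E) * (qr - 2)" unfolding Psum by (rule sum_bounded_above) (rule ple)
      then show ?thesis by (simp add: mult.commute)
    qed
    have e0: "e \<ge> 0" by (simp add: e_def)
    have z01: "z = 0 \<or> z = 1" by (simp add: z_def)
    define Ecr where "Ecr = real (card E)"
    have Ecpos: "Ecr > 0"
    proof (rule ccontr)
      assume "\<not> Ecr > 0"
      then have "Ecr = 0" unfolding Ecr_def by simp
      moreover have "0 \<le> real (card (UNIV :: 'a set)) powr ((real r + real n - 1) / real n)
                * (1 - \<alpha> * (1 - 2 / real (card (UNIV :: 'a set)))) powr (1 / real n)" by simp
      ultimately show False using h4 unfolding Ecr_def by linarith
    qed
    define Y where "Y = 1 - \<alpha> * (1 - 2 / qr)"
    have alpha: "\<alpha> \<le> P / ((qr - 2) * Ecr)" using pidx unfolding has_proj_index_def P_def Ecr_def qr_def q_def by simp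
    have Yge: "Y \<ge> 1 - P / (qr * Ecr)"
    proof -
      have "\<alpha> * (1 - 2 / qr) \<le> P / ((qr - 2) * Ecr) * (1 - 2 / qr)"
        using alpha q3' by (intro mult_right_mono) auto
      also have "\<dots> = P / (qr * Ecr)" using q3' Ecpos by (simp add: field_simps)
      finally show ?thesis unfolding Y_def by simp
    qed
    have Ypos: "Y > 0"
    proof -
      have "P / (qr * Ecr) \<le> (qr - 2) / qr"
        using Ple Ecpos qpos unfolding Ecr_def by (simp add: field_simps)
      then have "Y \<ge> 1 - (qr - 2) / qr" using Yge by simp
      also have "1 - (qr - 2) / qr = 2 / qr" using qpos by (simp add: field_simps)
      finally show ?thesis using qpos by (smt (verit) divide_pos_pos)
    qed
    define X0 where "X0 = qr powr ((real r + real n - 1) / real n)"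
    have h4': "Ecr > X0 * Y powr (1 / real n)" using h4 unfolding Ecr_def X0_def Y_def qr_def q_def .
    have npos: "n > 0" using n2 by simp
    have "Ecr ^ n > (X0 * Y powr (1 / real n)) ^ n"
      by (rule power_strict_mono[OF h4']) (simp_all add: X0_def npos)
    also have "(X0 * Y powr (1 / real n)) ^ n = X0 ^ n * (Y powr (1 / real n)) ^ n" by (simp add: power_mult_distrib)
    also have "X0 ^ n = qr ^ (r + n - 1)"
    proof -
      have "X0 ^ n = qr powr (real n * ((real r + real n - 1) / real n))"
        unfolding X0_def using qpos by (simp add: powr_power)
      also have "real n * ((real r + real n - 1) / real n) = real (r + n - 1)" using npos by (simp add: of_nat_diff)
      also have "qr powr real (r + n - 1) = qr ^ (r + n - 1)" using qpos by (rule powr_realpow)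
      finally show ?thesis .
    qed
    also have "(Y powr (1 / real n)) ^ n = Y"
    proof -
      have "(Y powr (1 / real n)) ^ n = Y powr (real n * (1 / real n))" using Ypos by (simp add: powr_power)
      also have "\<dots> = Y" using npos Ypos by simp
      finally show ?thesis .
    qed
    finally have E1: "Ecr ^ n > qr ^ (r + n - 1) * Y" .
    have E2: "Ecr ^ n > qr ^ (r + n - 1) * (1 - P / (qr * Ecr))"
      using E1 Yge by (smt (verit) mult_left_mono zero_le_power qpos)
    have qsplit: "qr ^ (r + n - 1) = qr ^ r * qr ^ (n - 2) * qr"
    proof -
      have "r + n - 1 = r + (n - 2) + 1" using n2 by simp
      then have "qr ^ (r + n - 1) = qr ^ (r + (n - 2) + 1)" by (rule arg_cong)
      then show ?thesis by (simp only: power_add power_one_right)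
    qed
    have E3: "Ecr ^ (n + 1) > qr ^ r * qr ^ (n - 2) * (qr * Ecr - P)"
    proof -
      have "Ecr ^ (n + 1) = Ecr ^ n * Ecr" by simp
      also have "\<dots> > qr ^ (r + n - 1) * (1 - P / (qr * Ecr)) * Ecr" using E2 Ecpos by simp
      also have "qr ^ (r + n - 1) * (1 - P / (qr * Ecr)) * Ecr = qr ^ r * qr ^ (n - 2) * (qr * Ecr - P)"
        unfolding qsplit using qpos Ecpos by (simp add: field_simps)
      finally show ?thesis .
    qed
    have F1: "Ecr ^ (n - 1) \<le> s * qr ^ (n - 2)"
      using boxpow_card_bound[OF finE, of "n - 1"] n2 unfolding Ecr_def s_def S_def qr_def q_def
      by (simp add: diff_diff_add numeral_2_eq_2)
    have mainI: "s * (e + z)^2 > qr ^ r * (qr * (e + z) - (P0 + z * (qr - 2)))"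
    proof -
      have "Ecr ^ (n + 1) = Ecr ^ (n - 1) * Ecr^2" using n2 by (simp add: power_add[symmetric])
      also have "\<dots> \<le> s * qr ^ (n - 2) * Ecr^2" using F1 by (intro mult_right_mono) auto
      finally have "qr ^ r * qr ^ (n - 2) * (qr * Ecr - P) < s * qr ^ (n - 2) * Ecr^2" using E3 by simp
      then have "qr ^ (n - 2) * (qr ^ r * (qr * Ecr - P)) < qr ^ (n - 2) * (s * Ecr^2)"
        by (simp add: algebra_simps)
      then have "qr ^ r * (qr * Ecr - P) < s * Ecr^2" using qpos by (simp add: mult_less_cancel_left)
      then show ?thesis unfolding Ecr_def Ec PP0 by simp
    qed
    have NQr: "real N \<le> qr ^ r" using NQ unfolding qr_def by (metis of_nat_le_iff of_nat_power)
    have sN: "s \<le> real N" unfolding s_def N_def using card_mono[OF finA SA] by simp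
    have s0: "s \<ge> 0" by (simp add: s_def)
    show False
      by (rule final_arith[OF q3' _ NQr s0 sN e0 P0ge P0le z01 CS mainI]) (use N0 in simp)
  qed
qed

end
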